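(* Let $S=S(\lambda_1,\ldots,\lambda_d)$ be a spider with $d\ge 2$ legs, and let $S'$ be the spider with $d-1$ legs obtained from $S$ by replacing two legs, of lengths $\lambda_i$ and $\lambda_j$ ($i\neq j$), by a single leg of length $\lambda_i+\lambda_j$ (so $S$ and $S'$ have the same number of vertices). If $S$ has a connected partition of type $\mu$, then $S'$ also has a connected partition of type $\mu$.
   Context: A spider $S(\lambda_1,\ldots,\lambda_d)$, for positive integers $\lambda_1,\ldots,\lambda_d$, is the tree consisting of a vertex $v$ (the center) together with $d$ vertex-disjoint paths (legs) having $\lambda_1,\ldots,\lambda_d$ vertices respectively, where $v$ is joined by an edge to one endpoint of each leg. A connected partition of a graph $G=(V,E)$ is a partition of $V$ into blocks each inducing a connected subgraph; its type is the integer partition of $|V|$ formed by the block sizes in decreasing order. *)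

theory Defs
  imports Main "HOL-Library.Multiset" "HOL-Library.Disjoint_Sets"
begin

(* A graph is given by a vertex set V and a symmetric adjacency predicate. *)

definition induces_connected :: "('a \<Rightarrow> 'a \<Rightarrow> bool) \<Rightarrow> 'a set \<Rightarrow> bool" where
  "induces_connected adj B \<longleftrightarrow> B \<noteq> {} \<and>
     (\<forall>x\<in>B. \<forall>y\<in>B. (\<lambda>u v. adj u v \<and> u \<in> B \<and> v \<in> B)\<^sup>*\<^sup>* x y)"

definition connected_partition :: "'a set \<Rightarrow> ('a \<Rightarrow> 'a \<Rightarrow> bool) \<Rightarrow> 'a set set \<Rightarrow> bool" where
  "connected_partition V adj P \<longleftrightarrow> partition_on V P \<and> (\<forall>B\<in>P. induces_connected adj B)"

(* type of a partition: the multiset of block sizes (an integer partition of |V|;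
   listing it in decreasing order is just a presentation of this multiset) *)
definition partition_type :: "'a set set \<Rightarrow> nat multiset" where
  "partition_type P = image_mset card (mset_set P)"

definition has_connected_partition_of_type ::
  "'a set \<Rightarrow> ('a \<Rightarrow> 'a \<Rightarrow> bool) \<Rightarrow> nat multiset \<Rightarrow> bool" where
  "has_connected_partition_of_type V adj \<mu> \<longleftrightarrow>
     (\<exists>P. connected_partition V adj P \<and> partition_type P = \<mu>)"

(* Spider S(lams!0, ..., lams!(d-1)): center (0,0); the t-th vertex (1 <= t <= lams!k)
   of leg k is (Suc k, t); the center is joined to (Suc k, 1). *)
definition spider_vertices :: "nat list \<Rightarrow> (nat \<times> nat) set" where
  "spider_vertices lams = {(0,0)} \<union> {(Suc k, t) | k t. k < length lams \<and> 1 \<le> t \<and> t \<le> lams ! k}"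

definition spider_adj :: "nat list \<Rightarrow> nat \<times> nat \<Rightarrow> nat \<times> nat \<Rightarrow> bool" where
  "spider_adj lams u v \<longleftrightarrow> u \<in> spider_vertices lams \<and> v \<in> spider_vertices lams \<and>
     ((u = (0,0) \<and> snd v = 1) \<or> (v = (0,0) \<and> snd u = 1) \<or>
      (fst u = fst v \<and> fst u \<noteq> 0 \<and> (snd v = Suc (snd u) \<or> snd u = Suc (snd v))))"

definition merge_legs :: "nat list \<Rightarrow> nat \<Rightarrow> nat \<Rightarrow> nat list" where
  "merge_legs lams i j =
     [lams ! k. k \<leftarrow> [0..<length lams], k \<noteq> i \<and> k \<noteq> j] @ [lams ! i + lams ! j]"

end

theory Submission
  imports Defs
begin

lemma rtranclp_sym:
  assumes "\<And>x y. R x y \<Longrightarrow> R y x" "R\<^sup>*\<^sup>* x y" shows "R\<^sup>*\<^sup>* y x"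
  using assms(2) by (induction rule: rtranclp_induct)
    (auto intro: converse_rtranclp_into_rtranclp assms(1))

lemma conn_image:
  assumes conn: "\<forall>x\<in>B. \<forall>y\<in>B. (\<lambda>u v. adj u v \<and> u \<in> B \<and> v \<in> B)\<^sup>*\<^sup>* x y"
   and edge: "\<And>u v. adj u v \<Longrightarrow> u \<in> B \<Longrightarrow> v \<in> B \<Longrightarrow>
        (\<lambda>u v. adj' u v \<and> u \<in> f ` B \<and> v \<in> f ` B)\<^sup>*\<^sup>* (f u) (f v)"
   and ne: "B \<noteq> {}"
  shows "induces_connected adj' (f ` B)"
  unfolding induces_connected_def
proof (intro conjI ballI)
  show "f ` B \<noteq> {}" using ne by auto
  fix x y assume "x \<in> f ` B" "y \<in> f ` B"
  then obtain x0 y0 where x0: "x0 \<in> B" "x = f x0" and y0: "y0 \<in> B" "y = f y0" by auto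
  have "(\<lambda>u v. adj u v \<and> u \<in> B \<and> v \<in> B)\<^sup>*\<^sup>* x0 y0" using conn x0 y0 by auto
  then have "(\<lambda>u v. adj' u v \<and> u \<in> f ` B \<and> v \<in> f ` B)\<^sup>*\<^sup>* (f x0) (f y0)"
    by (induction rule: rtranclp_induct) (auto intro: rtranclp_trans edge)
  then show "(\<lambda>u v. adj' u v \<and> u \<in> f ` B \<and> v \<in> f ` B)\<^sup>*\<^sup>* x y" using x0 y0 by simp
qed

lemma merge_legs_eq: "merge_legs lams i j = map (nth lams) (filter (\<lambda>k. k \<noteq> i \<and> k \<noteq> j) [0..<length lams]) @ [lams!i + lams!j]"
proof -
  have "\<And>xs. concat (map (\<lambda>k. if k \<noteq> i \<and> k \<noteq> j then [lams ! k] else []) xs) = map ((!) lams) (filter (\<lambda>k. k \<noteq> i \<and> k \<noteq> j) xs)"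
    subgoal for xs by (induction xs) auto done
  then show ?thesis unfolding merge_legs_def by simp
qed

locale spid =
  fixes lams :: "nat list" and i j :: nat and P :: "(nat \<times> nat) set set"
  assumes posl: "\<forall>k<length lams. lams!k > 0"
   and ii: "i < length lams" and jj: "j < length lams" and ij: "i \<noteq> j"
   and cp: "connected_partition (spider_vertices lams) (spider_adj lams) P"
begin

definition "L = filter (\<lambda>k. k \<noteq> i \<and> k \<noteq> j) [0..<length lams]"
definition "m = length L"
definition "L' = merge_legs lams i j"
lemma L'_eq: "L' = map (nth lams) L @ [lams!i + lams!j]"
  by (simp add: L'_def L_def merge_legs_eq)
lemma len_L': "length L' = Suc m" by (simp add: L'_eq m_def)
lemma L'_m: "L' ! m = lams!i+lams!j" by (simp add: L'_eq m_def nth_append)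
lemma L'_p: "p < m \<Longrightarrow> L' ! p = lams ! (L!p)" by (simp add: L'_eq m_def nth_append)
lemma set_L: "set L = {k. k < length lams \<and> k\<noteq>i \<and> k\<noteq>j}" by (auto simp: L_def)
lemma dist_L: "distinct L" by (simp add: L_def)
definition "pos k = the_inv_into {..<m} (nth L) k"
lemma inj_L: "inj_on (nth L) {..<m}"
  by (simp add: inj_on_def m_def dist_L nth_eq_iff_index_eq)
lemma pos2: "p < m \<Longrightarrow> pos (L!p) = p"
  unfolding pos_def by (rule the_inv_into_f_f[OF inj_L]) simp
lemma pos1: "k \<in> set L \<Longrightarrow> pos k < m \<and> L ! pos k = k"
proof -
  assume "k \<in> set L"
  then obtain p where "p < m" "L!p = k" by (auto simp: in_set_conv_nth m_def)
  then show ?thesis using pos2 by auto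
qed

definition "V = spider_vertices lams"
definition "V' = spider_vertices L'"
lemma memV: "x \<in> V \<longleftrightarrow> x = (0,0) \<or> (\<exists>k t. x = (Suc k, t) \<and> k < length lams \<and> 1 \<le> t \<and> t \<le> lams!k)"
  by (auto simp: V_def spider_vertices_def)
lemma V'0[simp]: "(0,t) \<in> V' \<longleftrightarrow> t = 0"
  by (auto simp: V'_def spider_vertices_def)
lemma V'S[simp]: "(Suc p,t) \<in> V' \<longleftrightarrow> p \<le> m \<and> 1 \<le> t \<and> t \<le> (if p = m then lams!i+lams!j else lams!(L!p))"
  by (auto simp: V'_def spider_vertices_def len_L' L'_m L'_p less_Suc_eq_le)
lemma V0[simp]: "(0,t) \<in> V \<longleftrightarrow> t = 0"
  by (auto simp: V_def spider_vertices_def)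
lemma VS[simp]: "(Suc k,t) \<in> V \<longleftrightarrow> k < length lams \<and> 1 \<le> t \<and> t \<le> lams!k"
  by (auto simp: V_def spider_vertices_def)

lemma part: "partition_on V P" using cp by (simp add: connected_partition_def V_def)
lemma conn: "B \<in> P \<Longrightarrow> induces_connected (spider_adj lams) B"
  using cp by (simp add: connected_partition_def)
lemma blocksub: "B \<in> P \<Longrightarrow> B \<subseteq> V" using partition_onD1[OF part] by auto
lemma same_block: "B \<in> P \<Longrightarrow> C \<in> P \<Longrightarrow> x \<in> B \<Longrightarrow> x \<in> C \<Longrightarrow> B = C"
  using partition_onD2[OF part] by (auto simp: disjoint_def)

definition "B0 = (SOME B. B \<in> P \<and> (0,0) \<in> B)"
lemma B0: "B0 \<in> P" "(0,0) \<in> B0"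
proof -
  have "(0,0) \<in> V" by (simp add: memV)
  then have "\<exists>B. B \<in> P \<and> (0,0) \<in> B" using partition_onD1[OF part] by auto
  then have "B0 \<in> P \<and> (0,0) \<in> B0" unfolding B0_def by (rule someI_ex)
  then show "B0 \<in> P" "(0,0) \<in> B0" by auto
qed

definition "pre k = Max {t. t \<le> lams!k \<and> (\<forall>s. 1 \<le> s \<and> s \<le> t \<longrightarrow> (Suc k, s) \<in> B0)}"
lemma pre: "pre k \<le> lams!k" "1 \<le> s \<Longrightarrow> s \<le> pre k \<Longrightarrow> (Suc k, s) \<in> B0"
   "pre k < lams!k \<Longrightarrow> (Suc k, Suc (pre k)) \<notin> B0"
proof -
  let ?S = "{t. t \<le> lams!k \<and> (\<forall>s. 1 \<le> s \<and> s \<le> t \<longrightarrow> (Suc k, s) \<in> B0)}"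
  have fin: "finite ?S" by (rule finite_subset[of _ "{..lams!k}"]) auto
  have "0 \<in> ?S" by auto
  then have "pre k \<in> ?S" unfolding pre_def using fin by (intro Max_in) auto
  then show "pre k \<le> lams!k" "1 \<le> s \<Longrightarrow> s \<le> pre k \<Longrightarrow> (Suc k, s) \<in> B0" by auto
  show "(Suc k, Suc (pre k)) \<notin> B0" if "pre k < lams!k"
  proof
    assume "(Suc k, Suc (pre k)) \<in> B0"
    then have "Suc (pre k) \<in> ?S" using that \<open>pre k \<in> ?S\<close> by (auto simp: le_Suc_eq)
    then have "Suc (pre k) \<le> pre k" unfolding pre_def using Max_ge[OF fin] by blast
    then show False by simp
  qed
qed

definition f :: "nat\<times>nat \<Rightarrow> nat\<times>nat" where
"f x = (case x of (0, _) \<Rightarrow> (0,0) | (Suc k, t) \<Rightarrow>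
   if k = i then (Suc m, if t \<le> pre i then t else t + pre j)
   else if k = j then (Suc m, if t \<le> pre j then pre i + t else lams!i + t)
   else (Suc (pos k), t))"

lemma f0[simp]: "f (0,t) = (0,0)" by (simp add: f_def)
lemma fi[simp]: "f (Suc i,t) = (Suc m, if t \<le> pre i then t else t + pre j)" by (simp add: f_def)
lemma fj[simp]: "f (Suc j,t) = (Suc m, if t \<le> pre j then pre i + t else lams!i + t)" using ij by (simp add: f_def)
lemma fk[simp]: "k \<noteq> i \<Longrightarrow> k \<noteq> j \<Longrightarrow> f (Suc k,t) = (Suc (pos k), t)" by (simp add: f_def)

lemma f_V: "x \<in> V \<Longrightarrow> f x \<in> V'"
proof (cases x)
  case (Pair x1 t)
  assume xV: "x \<in> V"
  show ?thesis
  proof (cases x1)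
    case 0 then show ?thesis using Pair xV by simp
  next
    case (Suc k)
    show ?thesis
    proof (cases "k = i \<or> k = j")
      case True then show ?thesis using Pair Suc xV pre(1)[of i] pre(1)[of j] ij by auto
    next
      case False
      then have "k \<in> set L" using Pair Suc xV by (auto simp: set_L)
      then show ?thesis using pos1[of k] False Pair Suc xV by auto
    qed
  qed
qed

lemma pos_inj: "k \<in> set L \<Longrightarrow> k' \<in> set L \<Longrightarrow> pos k = pos k' \<Longrightarrow> k = k'"
  using pos1 by metis

lemma inj_f_aux:
  assumes "(Suc k, t) \<in> V" "(Suc k', s) \<in> V" "f (Suc k, t) = f (Suc k', s)"
  shows "k = k' \<and> t = s"
proof -
  have pr: "pre i \<le> lams!i" "pre j \<le> lams!j" by (rule pre(1))+
  have ok: "k \<notin> {i,j} \<Longrightarrow> pos k < m" "k' \<notin> {i,j} \<Longrightarrow> pos k' < m"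
    using pos1[of k] pos1[of k'] assms(1,2) by (auto simp: set_L)
  show ?thesis
  proof (cases "k = i")
    case ki: True
    show ?thesis
    proof (cases "k' = i")
      case True then show ?thesis using ki assms(3) by (auto split: if_splits)
    next
      case False
      show ?thesis
      proof (cases "k' = j")
        case True then show ?thesis using ki ij assms pr by (auto split: if_splits)
      next
        case False then show ?thesis using ki \<open>k' \<noteq> i\<close> assms ok by (auto split: if_splits)
      qed
    qed
  next
    case kni: False
    show ?thesis
    proof (cases "k = j")
      case kj: True
      show ?thesis
      proof (cases "k' = i")
        case True then show ?thesis using kj ij assms pr by (auto split: if_splits)
      next
        case False
        show ?thesis
        proof (cases "k' = j")
          case True then show ?thesis using kj assms pr by (auto split: if_splits)
        next
          case False then show ?thesis using kj \<open>k' \<noteq> i\<close> assms ok ij by (auto split: if_splits)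
        qed
      qed
    next
      case knj: False
      show ?thesis
      proof (cases "k' = i \<or> k' = j")
        case True then show ?thesis using kni knj assms ok ij by (auto split: if_splits)
      next
        case False
        then have "pos k = pos k'" "t = s" using kni knj assms by auto
        then show ?thesis using pos_inj[of k k'] kni knj False assms(1,2) by (auto simp: set_L)
      qed
    qed
  qed
qed

lemma inj_f: "inj_on f V"
proof (rule inj_onI)
  fix x y assume xy: "x \<in> V" "y \<in> V" "f x = f y"
  obtain x1 t y1 s where xs: "x = (x1,t)" "y = (y1,s)" by fastforce
  show "x = y"
  proof (cases x1; cases y1)
    fix k k' assume "x1 = Suc k" "y1 = Suc k'"
    then show ?thesis using xy xs inj_f_aux[of k t k' s] by auto
  next
    fix k assume "x1 = Suc k" "y1 = 0"
    then show ?thesis using xy xs by (auto simp: f_def split: if_splits)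
  next
    fix k assume "x1 = 0" "y1 = Suc k"
    then show ?thesis using xy xs by (auto simp: f_def split: if_splits)
  qed (use xy xs in auto)
qed

lemma surj_f: "V' \<subseteq> f ` V"
proof
  fix y assume yV: "y \<in> V'"
  obtain p t where y: "y = (p,t)" by fastforce
  have pr: "pre i \<le> lams!i" "pre j \<le> lams!j" by (rule pre(1))+
  show "y \<in> f ` V"
  proof (cases p)
    case 0 then show ?thesis using y yV by (auto intro!: image_eqI[of _ _ "(0,0)"])
  next
    case (Suc q)
    show ?thesis
    proof (cases "q = m")
      case True
      have "t \<le> pre i \<or> (pre i < t \<and> t \<le> pre i + pre j) \<or> (pre i + pre j < t \<and> t \<le> lams!i + pre j)
          \<or> lams!i + pre j < t" by linarith
      then show ?thesis
      proof (elim disjE)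
        assume "t \<le> pre i" then show ?thesis using y yV Suc True ii pr
          by (auto intro!: image_eqI[of _ _ "(Suc i, t)"])
      next
        assume "pre i < t \<and> t \<le> pre i + pre j" then show ?thesis using y yV Suc True jj pr
          by (auto intro!: image_eqI[of _ _ "(Suc j, t - pre i)"])
      next
        assume "pre i + pre j < t \<and> t \<le> lams!i + pre j" then show ?thesis using y yV Suc True ii pr
          by (auto intro!: image_eqI[of _ _ "(Suc i, t - pre j)"])
      next
        assume "lams!i + pre j < t" then show ?thesis using y yV Suc True jj pr
          by (auto intro!: image_eqI[of _ _ "(Suc j, t - lams!i)"])
      qed
    next
      case False
      then have qm: "q < m" using y yV Suc by auto
      then have "L!q \<in> set L" by (simp add: m_def)
      then have "L!q < length lams" "L!q \<noteq> i" "L!q \<noteq> j" by (auto simp: set_L)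
      then show ?thesis using y yV Suc False qm pos2[OF qm]
        by (auto intro!: image_eqI[of _ _ "(Suc (L!q), t)"])
    qed
  qed
qed

definition "R' B u v \<longleftrightarrow> spider_adj L' u v \<and> u \<in> f`B \<and> v \<in> f`B"

lemma R'_sym: "R' B u v \<Longrightarrow> R' B v u"
  by (auto simp: R'_def spider_adj_def)

lemma stepR: "u \<in> f`B \<Longrightarrow> v \<in> f`B \<Longrightarrow> u \<in> V' \<Longrightarrow> v \<in> V' \<Longrightarrow>
   (u = (0,0) \<and> snd v = 1) \<or> (fst u = fst v \<and> fst u \<noteq> 0 \<and> snd v = Suc (snd u)) \<Longrightarrow> (R' B)\<^sup>*\<^sup>* u v"
  by (rule r_into_rtranclp) (auto simp: R'_def spider_adj_def V'_def)

lemma pre_pos: "B \<in> P \<Longrightarrow> (0,0) \<in> B \<Longrightarrow> (Suc k, 1) \<in> B \<Longrightarrow> k < length lams \<Longrightarrow> 1 \<le> pre k"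
proof (rule ccontr)
  assume a: "B \<in> P" "(0,0) \<in> B" "(Suc k, 1) \<in> B" "k < length lams" "\<not> 1 \<le> pre k"
  then have "B = B0" using same_block B0 by blast
  have "pre k < lams!k" using a posl by auto
  then have "(Suc k, Suc (pre k)) \<notin> B0" by (rule pre(3))
  moreover have "pre k = 0" using a by simp
  ultimately show False using a \<open>B = B0\<close> by auto
qed

lemma path: assumes "1 \<le> pre j"
  shows "1 \<le> s \<Longrightarrow> s \<le> Suc (pre i) \<Longrightarrow> (R' B0)\<^sup>*\<^sup>* (0,0) (Suc m, s)"
proof (induction s)
  case 0 then show ?case by simp
next
  case (Suc s)
  have pr: "pre i \<le> lams!i" "pre j \<le> lams!j" by (rule pre(1))+
  have mem: "(Suc m, r) \<in> f ` B0" if "1 \<le> r" "r \<le> Suc (pre i)" for r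
  proof (cases "r \<le> pre i")
    case True then show ?thesis using pre(2)[of r i] that by (auto intro!: image_eqI[of _ _ "(Suc i, r)"])
  next
    case False then have "r = Suc (pre i)" using that by simp
    then show ?thesis using pre(2)[of 1 j] assms by (auto intro!: image_eqI[of _ _ "(Suc j, 1)"])
  qed
  have z: "(0,0) \<in> f ` B0" using B0 by (auto intro!: image_eqI[of _ _ "(0,0)"])
  show ?case
  proof (cases "s = 0")
    case True then show ?thesis using mem[of 1] z pr assms by (intro stepR) auto
  next
    case False
    then have "(R' B0)\<^sup>*\<^sup>* (0,0) (Suc m, s)" using Suc by simp
    moreover have "(R' B0)\<^sup>*\<^sup>* (Suc m, s) (Suc m, Suc s)"
      using mem[of s] mem[of "Suc s"] False Suc.prems pr assms by (intro stepR) auto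
    ultimately show ?thesis by (rule rtranclp_trans)
  qed
qed

lemma E1: assumes "B \<in> P" "(0,0) \<in> B" "(Suc k, 1) \<in> B" "k < length lams"
  shows "(R' B)\<^sup>*\<^sup>* (f (0,0)) (f (Suc k, 1))"
proof -
  have BB: "B = B0" using same_block B0 assms by blast
  have p1: "1 \<le> pre k" by (rule pre_pos[OF assms])
  have pr: "pre i \<le> lams!i" "pre j \<le> lams!j" by (rule pre(1))+
  have fV: "f (Suc k, 1) \<in> V'" using f_V assms posl by (auto simp: Suc_le_eq)
  have mem: "f (0,0) \<in> f`B" "f (Suc k, 1) \<in> f ` B" using assms by (auto intro: imageI simp del: f0)
  show ?thesis
  proof (cases "k = j")
    case True
    have "(R' B0)\<^sup>*\<^sup>* (0,0) (Suc m, Suc (pre i))" using p1 True by (intro path) auto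
    then show ?thesis using True BB p1 by simp
  next
    case False
    then show ?thesis using mem fV p1 by (intro stepR) (auto simp: f_def)
  qed
qed

lemma E2: assumes "B \<in> P" "(Suc k, t) \<in> B" "(Suc k, Suc t) \<in> B" "k < length lams" "1 \<le> t" "Suc t \<le> lams!k"
  shows "(R' B)\<^sup>*\<^sup>* (f (Suc k, t)) (f (Suc k, Suc t))"
proof -
  have fV: "f (Suc k, t) \<in> V'" "f (Suc k, Suc t) \<in> V'" using f_V assms by auto
  have mem: "f (Suc k, t) \<in> f`B" "f (Suc k, Suc t) \<in> f ` B" using assms by auto
  have nt: "t \<noteq> pre k"
  proof
    assume tp: "t = pre k"
    then have "(Suc k, t) \<in> B0" using pre(2)[of t k] assms by simp
    then have "B = B0" using same_block B0 assms by blast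
    moreover have "(Suc k, Suc (pre k)) \<notin> B0" using tp assms by (intro pre(3)) simp
    ultimately show False using assms tp by simp
  qed
  show ?thesis
  proof (cases "k = i")
    case True then show ?thesis using mem fV nt by (intro stepR) auto
  next
    case False
    show ?thesis
    proof (cases "k = j")
      case True then show ?thesis using mem fV nt by (intro stepR) auto
    next
      case False then show ?thesis using \<open>k \<noteq> i\<close> mem fV by (intro stepR) auto
    qed
  qed
qed

lemma edge: assumes "B \<in> P" "spider_adj lams u v" "u \<in> B" "v \<in> B"
  shows "(R' B)\<^sup>*\<^sup>* (f u) (f v)"
proof -
  have uV: "u \<in> V" "v \<in> V" using assms blocksub by auto
  have sym: "\<And>x y. R' B x y \<Longrightarrow> R' B y x" by (rule R'_sym)
  have "(u = (0,0) \<and> snd v = 1) \<or> (v = (0,0) \<and> snd u = 1) \<or>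
      (fst u = fst v \<and> fst u \<noteq> 0 \<and> snd v = Suc (snd u)) \<or> (fst u = fst v \<and> fst u \<noteq> 0 \<and> snd u = Suc (snd v))"
    using assms(2) by (auto simp: spider_adj_def)
  then show ?thesis
  proof (elim disjE)
    assume a: "u = (0,0) \<and> snd v = 1"
    then obtain k where "v = (Suc k, 1)" using uV by (cases v; cases "fst v") auto
    then show ?thesis using a E1[of B k] assms uV by auto
  next
    assume a: "v = (0,0) \<and> snd u = 1"
    then obtain k where "u = (Suc k, 1)" using uV by (cases u; cases "fst u") auto
    then show ?thesis using a E1[of B k] assms uV rtranclp_sym[OF sym] by auto
  next
    assume a: "fst u = fst v \<and> fst u \<noteq> 0 \<and> snd v = Suc (snd u)"
    then obtain k t where "u = (Suc k, t)" "v = (Suc k, Suc t)" by (cases u; cases v; cases "fst u") auto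
    then show ?thesis using E2[of B k t] assms uV by auto
  next
    assume a: "fst u = fst v \<and> fst u \<noteq> 0 \<and> snd u = Suc (snd v)"
    then obtain k t where "v = (Suc k, t)" "u = (Suc k, Suc t)" by (cases u; cases v; cases "fst u") auto
    then show ?thesis using E2[of B k t] assms uV rtranclp_sym[OF sym] by auto
  qed
qed

lemma main: "has_connected_partition_of_type V' (spider_adj L') (partition_type P)"
  unfolding has_connected_partition_of_type_def
proof (intro exI conjI)
  have fV: "f ` V = V'" using f_V surj_f by auto
  have ne: "{} \<notin> P" using partition_onD3[OF part] .
  have eq: "(`) f ` P - {{}} = (`) f ` P" using ne by auto
  have pp: "partition_on V' ((`) f ` P)"
    using partition_on_inj_image[OF part inj_f] fV eq by simp
  have cc: "\<forall>B' \<in> (`) f ` P. induces_connected (spider_adj L') B'"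
  proof
    fix B' assume "B' \<in> (`) f ` P"
    then obtain B where B: "B \<in> P" "B' = f ` B" by auto
    have "induces_connected (spider_adj L') (f ` B)"
    proof (rule conn_image)
      show "\<forall>x\<in>B. \<forall>y\<in>B. (\<lambda>u v. spider_adj lams u v \<and> u \<in> B \<and> v \<in> B)\<^sup>*\<^sup>* x y"
        using conn[OF B(1)] by (simp add: induces_connected_def)
      show "B \<noteq> {}" using ne B by auto
      fix u v assume "spider_adj lams u v" "u \<in> B" "v \<in> B"
      then have "(R' B)\<^sup>*\<^sup>* (f u) (f v)" using edge B by blast
      then show "(\<lambda>u v. spider_adj L' u v \<and> u \<in> f ` B \<and> v \<in> f ` B)\<^sup>*\<^sup>* (f u) (f v)"
        by (simp add: R'_def[abs_def])
    qed
    then show "induces_connected (spider_adj L') B'" using B by simp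
  qed
  show "connected_partition V' (spider_adj L') ((`) f ` P)"
    using pp cc by (simp add: connected_partition_def)
  have injP: "inj_on ((`) f) P"
  proof (rule inj_onI)
    fix B C assume "B \<in> P" "C \<in> P" "f ` B = f ` C"
    then show "B = C" using inj_on_image_eq_iff[OF inj_f] blocksub by blast
  qed
  have "partition_type ((`) f ` P) = image_mset card (image_mset ((`) f) (mset_set P))"
    unfolding partition_type_def image_mset_mset_set[OF injP] ..
  also have "\<dots> = image_mset (\<lambda>B. card (f ` B)) (mset_set P)"
    by (simp add: multiset.map_comp comp_def)
  also have "\<dots> = image_mset card (mset_set P)"
  proof (rule image_mset_cong)
    fix B assume "B \<in># mset_set P"
    then have "B \<in> P" by (cases "finite P") auto
    then have "inj_on f B" using inj_on_subset[OF inj_f] blocksub by blast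
    then show "card (f ` B) = card B" by (rule card_image)
  qed
  finally show "partition_type ((`) f ` P) = partition_type P" by (simp add: partition_type_def)
qed

end

theorem proposition6p1:
  fixes lams :: "nat list" and i j :: nat and \<mu> :: "nat multiset"
  assumes "length lams \<ge> 2"
    and "\<forall>k < length lams. lams ! k > 0"
    and "i < length lams" and "j < length lams" and "i \<noteq> j"
    and "has_connected_partition_of_type (spider_vertices lams) (spider_adj lams) \<mu>"
  shows "has_connected_partition_of_type (spider_vertices (merge_legs lams i j))
           (spider_adj (merge_legs lams i j)) \<mu>"
proof -
  obtain P where P: "connected_partition (spider_vertices lams) (spider_adj lams) P" "partition_type P = \<mu>"
    using assms(6) by (auto simp: has_connected_partition_of_type_def)
  interpret spid lams i j P using assms P by unfold_locales auto
  show ?thesis using main P(2) by (simp add: V'_def L'_def)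
qed

end
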